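(* An $Ł_n$-valued effectivity function $E:\mathcal P N\times Ł_n^S\to Ł_n$ is playable if and only if it is semi-playable, homogeneous, regular and $N$-maximal.
   Context: For a positive integer $n$ let $Ł_n=\{0,\frac1n,\dots,1\}$ with $\neg x=1-x$, $x\oplus y=\min(x+y,1)$, $x\odot y=\max(x+y-1,0)$, $\wedge=\min$, $\vee=\max$, applied pointwise on $Ł_n^S$; $0,1$ also denote constant functions. Standing assumptions: $N$ finite, $|N|\ge2$, $|S|\ge2$; $\overline C=N\setminus C$. An $Ł_n$-valued effectivity function is any map $E:\mathcal P N\times Ł_n^S\to Ł_n$. It is: outcome monotonic if $f\ge g$ implies $E(C,f)\ge E(C,g)$; $N$-maximal if $\neg E(\varnothing,\neg f)\le E(N,f)$; regular if $E(C,f)\le\neg E(\overline C,\neg f)$ for all $C,f$; superadditive if $E(C_1,f)\wedge E(C_2,g)\le E(C_1\cup C_2,f\wedge g)$ whenever $C_1\cap C_2=\varnothing$; homogeneous if $E(C,f\oplus f)=E(C,f)\oplus E(C,f)$ and $E(C,f\odot f)=E(C,f)\odot E(C,f)$; has liveness if $E(C,1)=1$ for all $C$; has safety if $E(C,0)=0$ for all $C$. Playable: outcome monotonic, $N$-maximal, superadditive, homogeneous, liveness and safety. $E$ is semi-playable if $E(C,f)\le E(C,g)$ for all $f\le g$ and all $C\ne N$, $E(C,1)=1$ and $E(C,0)=0$ for all $C\ne N$, and $E(C_1,f)\wedge E(C_2,g)\le E(C_1\cup C_2,f\wedge g)$ for all $f,g$ and all $C_1,C_2$ with $C_1\cap C_2=\varnothing$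 and $C_1\cup C_2\ne N$. *)

theory Defs
  imports "HOL-Library.FuncSet" Complex_Main
begin

definition Ln :: "nat \<Rightarrow> real set" where
  "Ln n = {real k / real n | k. k \<le> n}"

definition LnF :: "nat \<Rightarrow> 's set \<Rightarrow> ('s \<Rightarrow> real) set" where
  "LnF n S = S \<rightarrow>\<^sub>E Ln n"

definition mv_oplus :: "real \<Rightarrow> real \<Rightarrow> real" where
  "mv_oplus x y = min (x + y) 1"

definition mv_odot :: "real \<Rightarrow> real \<Rightarrow> real" where
  "mv_odot x y = max (x + y - 1) 0"

definition fneg :: "'s set \<Rightarrow> ('s \<Rightarrow> real) \<Rightarrow> ('s \<Rightarrow> real)" where
  "fneg S f = (\<lambda>s\<in>S. 1 - f s)"

definition foplus :: "'s set \<Rightarrow> ('s \<Rightarrow> real) \<Rightarrow> ('s \<Rightarrow> real) \<Rightarrow> ('s \<Rightarrow> real)" where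
  "foplus S f g = (\<lambda>s\<in>S. mv_oplus (f s) (g s))"

definition fodot :: "'s set \<Rightarrow> ('s \<Rightarrow> real) \<Rightarrow> ('s \<Rightarrow> real) \<Rightarrow> ('s \<Rightarrow> real)" where
  "fodot S f g = (\<lambda>s\<in>S. mv_odot (f s) (g s))"

definition fmin :: "'s set \<Rightarrow> ('s \<Rightarrow> real) \<Rightarrow> ('s \<Rightarrow> real) \<Rightarrow> ('s \<Rightarrow> real)" where
  "fmin S f g = (\<lambda>s\<in>S. min (f s) (g s))"

definition fconst :: "'s set \<Rightarrow> real \<Rightarrow> ('s \<Rightarrow> real)" where
  "fconst S c = (\<lambda>s\<in>S. c)"

definition fle :: "'s set \<Rightarrow> ('s \<Rightarrow> real) \<Rightarrow> ('s \<Rightarrow> real) \<Rightarrow> bool" where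
  "fle S f g \<longleftrightarrow> (\<forall>s\<in>S. f s \<le> g s)"

definition eff_fun :: "nat \<Rightarrow> 'a set \<Rightarrow> 's set \<Rightarrow> ('a set \<Rightarrow> ('s \<Rightarrow> real) \<Rightarrow> real) \<Rightarrow> bool" where
  "eff_fun n N S E \<longleftrightarrow> (\<forall>C\<subseteq>N. \<forall>f\<in>LnF n S. E C f \<in> Ln n)"

definition outcome_monotonic where
  "outcome_monotonic n N S E \<longleftrightarrow>
     (\<forall>C\<subseteq>N. \<forall>f\<in>LnF n S. \<forall>g\<in>LnF n S. fle S g f \<longrightarrow> E C g \<le> E C f)"

definition N_maximal where
  "N_maximal n N S E \<longleftrightarrow> (\<forall>f\<in>LnF n S. 1 - E {} (fneg S f) \<le> E N f)"

definition regular where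
  "regular n N S E \<longleftrightarrow> (\<forall>C\<subseteq>N. \<forall>f\<in>LnF n S. E C f \<le> 1 - E (N - C) (fneg S f))"

definition superadditive where
  "superadditive n N S E \<longleftrightarrow>
     (\<forall>C1\<subseteq>N. \<forall>C2\<subseteq>N. \<forall>f\<in>LnF n S. \<forall>g\<in>LnF n S. C1 \<inter> C2 = {} \<longrightarrow>
        min (E C1 f) (E C2 g) \<le> E (C1 \<union> C2) (fmin S f g))"

definition homogeneous where
  "homogeneous n N S E \<longleftrightarrow>
     (\<forall>C\<subseteq>N. \<forall>f\<in>LnF n S.
        E C (foplus S f f) = mv_oplus (E C f) (E C f) \<and>
        E C (fodot S f f) = mv_odot (E C f) (E C f))"

definition liveness where
  "liveness n N S E \<longleftrightarrow> (\<forall>C\<subseteq>N. E C (fconst S 1) = 1)"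

definition safety where
  "safety n N S E \<longleftrightarrow> (\<forall>C\<subseteq>N. E C (fconst S 0) = 0)"

definition playable where
  "playable n N S E \<longleftrightarrow> outcome_monotonic n N S E \<and> N_maximal n N S E \<and>
     superadditive n N S E \<and> homogeneous n N S E \<and> liveness n N S E \<and> safety n N S E"

definition semi_playable where
  "semi_playable n N S E \<longleftrightarrow>
     (\<forall>C\<subseteq>N. C \<noteq> N \<longrightarrow> (\<forall>f\<in>LnF n S. \<forall>g\<in>LnF n S. fle S f g \<longrightarrow> E C f \<le> E C g)) \<and>
     (\<forall>C\<subseteq>N. C \<noteq> N \<longrightarrow> E C (fconst S 1) = 1 \<and> E C (fconst S 0) = 0) \<and>
     (\<forall>C1\<subseteq>N. \<forall>C2\<subseteq>N. \<forall>f\<in>LnF n S. \<forall>g\<in>LnF n S. C1 \<inter> C2 = {} \<longrightarrow> C1 \<union> C2 \<noteq> N \<longrightarrow>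
        min (E C1 f) (E C2 g) \<le> E (C1 \<union> C2) (fmin S f g))"

end

theory Submission
  imports Defs
begin

fun mvapp :: "bool list \<Rightarrow> real \<Rightarrow> real" where
  "mvapp [] x = x"
| "mvapp (b#bs) x = mvapp bs (if b then mv_oplus x x else mv_odot x x)"

lemma mvapp_append: "mvapp (bs @ cs) x = mvapp cs (mvapp bs x)"
  by (induction bs arbitrary: x) auto

lemma mvapp_mono: "x \<le> y \<Longrightarrow> mvapp bs x \<le> mvapp bs y"
proof (induction bs arbitrary: x y)
  case Nil then show ?case by simp
next
  case (Cons b bs)
  have "mv_oplus x x \<le> mv_oplus y y" "mv_odot x x \<le> mv_odot y y"
    using Cons.prems by (auto simp: mv_oplus_def mv_odot_def)
  then show ?case using Cons by auto
qed

lemma mvapp_min: "mvapp bs (min x y) = min (mvapp bs x) (mvapp bs y)"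
proof (cases "x \<le> y")
  case True
  then show ?thesis using mvapp_mono[OF True, of bs] by (simp add: min_def)
next
  case False
  then have "y \<le> x" by simp
  then show ?thesis using mvapp_mono[OF \<open>y \<le> x\<close>, of bs] False by (simp add: min_def)
qed

lemma mvapp_neg: "mvapp (map Not bs) (1 - x) = 1 - mvapp bs x"
proof (induction bs arbitrary: x)
  case Nil then show ?case by simp
next
  case (Cons b bs)
  have a: "mv_odot (1-x) (1-x) = 1 - mv_oplus x x" "mv_oplus (1-x) (1-x) = 1 - mv_odot x x"
    by (auto simp: mv_oplus_def mv_odot_def)
  show ?case using Cons[of "mv_oplus x x"] Cons[of "mv_odot x x"] by (simp add: a)
qed

lemma mvapp_rep: "0 \<le> x \<Longrightarrow> x \<le> 1 \<Longrightarrow> mvapp (replicate m True) x = min (2^m * x) 1"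
proof (induction m arbitrary: x)
  case 0 then show ?case using \<open>0 \<le> x\<close> by simp
next
  case (Suc m)
  have "mvapp (replicate (Suc m) True) x = mvapp (replicate m True) (min (2*x) 1)"
    by (simp add: mv_oplus_def)
  also have "\<dots> = min (2^m * min (2*x) 1) 1" using Suc.IH[of "min (2*x) 1"] Suc.prems by simp
  also have "\<dots> = min (2^Suc m * x) 1"
  proof (cases "2*x \<le> 1")
    case True then show ?thesis by (simp add: min_def)
  next
    case False
    have "(1::real) \<le> 2^m" by simp
    then have "1 \<le> 2^m * (2*x)" using False
      by (metis dual_order.trans less_eq_real_def mult.commute mult_le_cancel_right1 not_le)
    have e1: "min (2*x) 1 = 1" using False by simp
    have e2: "min (2^Suc m * x) 1 = 1" using \<open>1 \<le> 2^m * (2*x)\<close> by (simp add: mult.assoc mult.commute mult.left_commute)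
    show ?thesis using \<open>1 \<le> 2^m\<close> by (simp only: e1 e2)
  qed
  finally show ?case .
qed

lemma sep: "0 \<le> x \<Longrightarrow> y \<le> 1 \<Longrightarrow> (1/2)^k < y - x \<Longrightarrow> \<exists>bs. mvapp bs x = 0 \<and> 0 < mvapp bs y"
proof (induction k arbitrary: x y)
  case 0 then show ?case by simp
next
  case (Suc k)
  show ?case
  proof (cases "1/2 \<le> x")
    case True
    have "0 < (1/2::real)^Suc k" by simp
    then have "x < y" using Suc.prems by linarith
    have "(1/2)^k < (2*y-1) - (2*x-1)" using Suc.prems by simp
    then obtain bs where "mvapp bs (2*x-1) = 0" "0 < mvapp bs (2*y-1)"
      using Suc.IH[of "2*x-1" "2*y-1"] True Suc.prems by auto
    moreover have "mv_odot x x = 2*x-1" "mv_odot y y = 2*y-1"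
      using True Suc.prems \<open>x < y\<close> by (auto simp: mv_odot_def)
    ultimately show ?thesis by (intro exI[of _ "False#bs"]) simp
  next
    case F: False
    show ?thesis
    proof (cases "y \<le> 1/2")
      case True
      have "0 < (1/2::real)^Suc k" by simp
      then have "x < y" using Suc.prems by linarith
      have "(1/2)^k < (2*y) - (2*x)" using Suc.prems by simp
      then obtain bs where "mvapp bs (2*x) = 0" "0 < mvapp bs (2*y)"
        using Suc.IH[of "2*x" "2*y"] True Suc.prems by auto
      moreover have "mv_oplus x x = 2*x" "mv_oplus y y = 2*y"
        using True Suc.prems \<open>x < y\<close> by (auto simp: mv_oplus_def)
      ultimately show ?thesis by (intro exI[of _ "True#bs"]) simp
    next
      case False
      then show ?thesis using F by (intro exI[of _ "[False]"]) (simp add: mv_odot_def)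
    qed
  qed
qed

lemma Ln_iff: "x \<in> Ln n \<longleftrightarrow> (\<exists>k\<le>n. x = real k / real n)"
  by (auto simp: Ln_def)

lemma Ln_range: "0 < n \<Longrightarrow> x \<in> Ln n \<Longrightarrow> 0 \<le> x \<and> x \<le> 1"
  by (auto simp: Ln_iff)

lemma Ln_0: "0 \<in> Ln n" by (auto simp: Ln_iff intro: exI[of _ 0])
lemma Ln_1: "0 < n \<Longrightarrow> 1 \<in> Ln n" by (auto simp: Ln_iff intro!: exI[of _ n])

lemma Ln_neg: "0 < n \<Longrightarrow> x \<in> Ln n \<Longrightarrow> 1 - x \<in> Ln n"
proof -
  assume n: "0 < n" and "x \<in> Ln n"
  then obtain k where k: "k \<le> n" "x = real k / real n" by (auto simp: Ln_iff)
  then have "1 - x = real (n - k) / real n" using n by (simp add: field_simps of_nat_diff)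
  then show ?thesis unfolding Ln_iff by (intro exI[of _ "n-k"]) auto
qed

lemma Ln_oplus: "0 < n \<Longrightarrow> x \<in> Ln n \<Longrightarrow> mv_oplus x x \<in> Ln n"
proof -
  assume n: "0 < n" and "x \<in> Ln n"
  then obtain k where k: "k \<le> n" "x = real k / real n" by (auto simp: Ln_iff)
  show ?thesis
  proof (cases "2*k \<le> n")
    case True
    have "x + x = real (2*k) / real n" using k by (simp add: add_divide_distrib)
    moreover have "real (2*k) / real n \<le> 1" using True n by simp
    ultimately have "mv_oplus x x = real (2*k) / real n" by (simp add: mv_oplus_def)
    then show ?thesis using True Ln_iff by blast
  next
    case False
    have "x + x = real (2*k) / real n" using k by (simp add: add_divide_distrib)
    moreover have "1 \<le> real (2*k) / real n" using False n by simp
    ultimately have "mv_oplus x x = 1" by (simp add: mv_oplus_def)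
    then show ?thesis using Ln_1 n by simp
  qed
qed

lemma Ln_odot: "0 < n \<Longrightarrow> x \<in> Ln n \<Longrightarrow> mv_odot x x \<in> Ln n"
proof -
  assume n: "0 < n" and "x \<in> Ln n"
  then obtain k where k: "k \<le> n" "x = real k / real n" by (auto simp: Ln_iff)
  show ?thesis
  proof (cases "n \<le> 2*k")
    case True
    have "x + x - 1 = real (2*k - n) / real n" using k n True
      by (simp add: of_nat_diff diff_divide_distrib add_divide_distrib)
    then have "mv_odot x x = real (2*k - n) / real n" by (simp add: mv_odot_def)
    then show ?thesis using True k Ln_iff by (metis diff_le_mono le_diff_conv mult_2 add_le_mono)
  next
    case False
    have "x + x = real (2*k) / real n" using k by (simp add: add_divide_distrib)
    moreover have "real (2*k) / real n \<le> 1" using False n by simp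
    ultimately have "mv_odot x x = 0" by (simp add: mv_odot_def)
    then show ?thesis using Ln_0 by simp
  qed
qed

lemma mvapp_Ln: "0 < n \<Longrightarrow> x \<in> Ln n \<Longrightarrow> mvapp bs x \<in> Ln n"
  by (induction bs arbitrary: x) (auto simp: Ln_oplus Ln_odot)

lemma Ln_pos: "0 < n \<Longrightarrow> x \<in> Ln n \<Longrightarrow> 0 < x \<Longrightarrow> 1 / real n \<le> x"
proof -
  assume n: "0 < n" and "x \<in> Ln n" "0 < x"
  then obtain k where k: "k \<le> n" "x = real k / real n" by (auto simp: Ln_iff)
  then have "1 \<le> k" using \<open>0 < x\<close> by (cases k) auto
  then show ?thesis using k n by (simp add: divide_right_mono)
qed

lemma Ln_gap: "0 < n \<Longrightarrow> x \<in> Ln n \<Longrightarrow> y \<in> Ln n \<Longrightarrow> x < y \<Longrightarrow> 1 / real n \<le> y - x"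
proof -
  assume n: "0 < n" and "x \<in> Ln n" "y \<in> Ln n" "x < y"
  then obtain k j where k: "k \<le> n" "x = real k / real n" "j \<le> n" "y = real j / real n"
    by (auto simp: Ln_iff)
  then have "k < j" using \<open>x < y\<close> n by (auto simp: divide_less_cancel)
  then have "y - x = real (j - k) / real n" using k by (simp add: of_nat_diff diff_divide_distrib)
  moreover have "1 \<le> j - k" using \<open>k < j\<close> by simp
  ultimately show ?thesis using n by (simp add: divide_right_mono)
qed

lemma bool_fin: "0 < n \<Longrightarrow> w \<in> Ln n \<Longrightarrow> mvapp (replicate n True) w = (if w = 0 then 0 else 1)"
proof -
  assume n: "0 < n" and w: "w \<in> Ln n"
  have w0: "0 \<le> w" using Ln_range[OF n w] by simp
  show ?thesis
  proof (cases "w = 0")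
    case True then show ?thesis using mvapp_rep[of 0 n] by simp
  next
    case False
    then have "1 / real n \<le> w" using Ln_pos[OF n w] w0 by simp
    moreover have "real n \<le> 2^n" using less_exp[of n]
      by (metis less_imp_le of_nat_le_iff of_nat_numeral of_nat_power)
    moreover have "1 \<le> real n * w" using \<open>1 / real n \<le> w\<close> n
      by (simp add: divide_le_eq mult.commute)
    ultimately have "1 \<le> 2^n * w" using w0
      by (meson mult_right_mono order_trans)
    then show ?thesis using mvapp_rep[OF w0, of n] Ln_range[OF n w] False by simp
  qed
qed

lemma sepLn: "0 < n \<Longrightarrow> x \<in> Ln n \<Longrightarrow> y \<in> Ln n \<Longrightarrow> x < y \<Longrightarrow>
   \<exists>bs. mvapp bs x = 0 \<and> mvapp bs y = 1 \<and> (\<forall>z\<in>Ln n. mvapp bs z = 0 \<or> mvapp bs z = 1)"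
proof -
  assume n: "0 < n" and x: "x \<in> Ln n" and y: "y \<in> Ln n" and xy: "x < y"
  have "real n < 2^n" using less_exp[of n]
    by (metis of_nat_less_iff of_nat_numeral of_nat_power)
  then have "(1/2)^n < 1 / real n" using n by (simp add: power_one_over field_simps)
  also have "\<dots> \<le> y - x" using Ln_gap[OF n x y xy] .
  finally obtain bs where bs: "mvapp bs x = 0" "0 < mvapp bs y"
    using sep[of x y n] Ln_range[OF n x] Ln_range[OF n y] by auto
  let ?bs = "bs @ replicate n True"
  have "mvapp ?bs x = 0" using bs bool_fin[OF n, of 0] Ln_0 by (simp add: mvapp_append)
  moreover have "mvapp ?bs y = 1" using bs bool_fin[OF n mvapp_Ln[OF n y, of bs]]
    by (simp add: mvapp_append)
  moreover have "\<forall>z\<in>Ln n. mvapp ?bs z = 0 \<or> mvapp ?bs z = 1"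
    using bool_fin[OF n mvapp_Ln[OF n]] by (simp add: mvapp_append)
  ultimately show ?thesis by blast
qed

lemma LnF_iff: "f \<in> LnF n S \<longleftrightarrow> (\<forall>s\<in>S. f s \<in> Ln n) \<and> f \<in> extensional S"
  by (simp add: LnF_def PiE_iff)

lemma LnF_restrict: "(\<lambda>s\<in>S. h s) \<in> LnF n S \<longleftrightarrow> (\<forall>s\<in>S. h s \<in> Ln n)"
  by (simp add: LnF_def restrict_PiE_iff Pi_iff)

lemma LnF_val: "f \<in> LnF n S \<Longrightarrow> s \<in> S \<Longrightarrow> f s \<in> Ln n"
  by (simp add: LnF_iff)

lemma fneg_LnF: "0 < n \<Longrightarrow> f \<in> LnF n S \<Longrightarrow> fneg S f \<in> LnF n S"
  by (simp add: fneg_def LnF_restrict LnF_val Ln_neg)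

lemma fmin_LnF: "f \<in> LnF n S \<Longrightarrow> g \<in> LnF n S \<Longrightarrow> fmin S f g \<in> LnF n S"
  by (simp add: fmin_def LnF_restrict LnF_val min_def)

lemma fconst_LnF: "c \<in> Ln n \<Longrightarrow> fconst S c \<in> LnF n S"
  by (simp add: fconst_def LnF_restrict)

lemma fapp_LnF: "0 < n \<Longrightarrow> f \<in> LnF n S \<Longrightarrow> (\<lambda>s\<in>S. mvapp bs (f s)) \<in> LnF n S"
  by (simp add: LnF_restrict LnF_val mvapp_Ln)

lemma hom_iter:
  assumes h: "homogeneous n N S E" and C: "C \<subseteq> N" and n: "0 < n"
  shows "f \<in> LnF n S \<Longrightarrow> E C (\<lambda>s\<in>S. mvapp bs (f s)) = mvapp bs (E C f)"
proof (induction bs arbitrary: f)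
  case Nil
  then have "(\<lambda>s\<in>S. f s) = f" by (simp add: LnF_iff extensional_restrict)
  then show ?case by simp
next
  case (Cons b bs)
  define f' where "f' = (if b then foplus S f f else fodot S f f)"
  have f': "f' \<in> LnF n S" using Cons.prems n
    by (auto simp: f'_def foplus_def fodot_def LnF_restrict LnF_val Ln_oplus Ln_odot)
  have eq: "(\<lambda>s\<in>S. mvapp (b#bs) (f s)) = (\<lambda>s\<in>S. mvapp bs (f' s))"
    by (rule restrict_ext) (simp add: f'_def foplus_def fodot_def)
  have "E C f' = (if b then mv_oplus (E C f) (E C f) else mv_odot (E C f) (E C f))"
    using h C Cons.prems unfolding homogeneous_def f'_def by auto
  then show ?case using Cons.IH[OF f'] eq by simp
qed

theorem mainTheorem7:
  fixes n :: nat and N :: "'a set" and S :: "'s set"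
    and E :: "'a set \<Rightarrow> ('s \<Rightarrow> real) \<Rightarrow> real"
  assumes "0 < n" and "finite N" and "2 \<le> card N"
    and "\<exists>a\<in>S. \<exists>b\<in>S. a \<noteq> b"
    and "eff_fun n N S E"
  shows "playable n N S E \<longleftrightarrow>
    (semi_playable n N S E \<and> homogeneous n N S E \<and> regular n N S E \<and> N_maximal n N S E)"
proof -
  note n = assms(1)
  have Nne: "N \<noteq> {}" using assms(3) by auto
  have Ev: "\<And>C f. C \<subseteq> N \<Longrightarrow> f \<in> LnF n S \<Longrightarrow> E C f \<in> Ln n"
    using assms(5) by (auto simp: eff_fun_def)
  have Evr: "\<And>C f. C \<subseteq> N \<Longrightarrow> f \<in> LnF n S \<Longrightarrow> 0 \<le> E C f \<and> E C f \<le> 1"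
    using Ev Ln_range[OF n] by blast
  have fn0: "fneg S (fconst S 1) = fconst S 0"
    unfolding fneg_def fconst_def by (rule restrict_ext) simp
  have fn1: "fneg S (fconst S 0) = fconst S 1"
    unfolding fneg_def fconst_def by (rule restrict_ext) simp
  have c0: "fconst S 0 \<in> LnF n S" and c1: "fconst S 1 \<in> LnF n S"
    using fconst_LnF Ln_0 Ln_1[OF n] by auto
  show ?thesis
  proof
    assume P: "playable n N S E"
    then have om: "outcome_monotonic n N S E" and nm: "N_maximal n N S E"
      and sa: "superadditive n N S E" and ho: "homogeneous n N S E"
      and li: "liveness n N S E" and sf: "safety n N S E"
      by (simp_all add: playable_def)
    have omv: "\<And>C f g. C \<subseteq> N \<Longrightarrow> f \<in> LnF n S \<Longrightarrow> g \<in> LnF n S \<Longrightarrow> fle S f g \<Longrightarrow> E C f \<le> E C g"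
      using om unfolding outcome_monotonic_def by simp
    have liv: "\<And>C. C \<subseteq> N \<Longrightarrow> E C (fconst S 1) = 1" using li unfolding liveness_def by simp
    have sfv: "\<And>C. C \<subseteq> N \<Longrightarrow> E C (fconst S 0) = 0" using sf unfolding safety_def by simp
    have sav: "\<And>C1 C2 f g. C1 \<subseteq> N \<Longrightarrow> C2 \<subseteq> N \<Longrightarrow> f \<in> LnF n S \<Longrightarrow> g \<in> LnF n S \<Longrightarrow>
        C1 \<inter> C2 = {} \<Longrightarrow> min (E C1 f) (E C2 g) \<le> E (C1 \<union> C2) (fmin S f g)"
      using sa unfolding superadditive_def by simp
    have semi: "semi_playable n N S E"
      unfolding semi_playable_def
      by (intro conjI allI impI ballI) (simp_all add: omv liv sfv sav)
    have reg: "regular n N S E"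
      unfolding regular_def
    proof (intro allI impI ballI)
      fix C f assume C: "C \<subseteq> N" and f: "f \<in> LnF n S"
      show "E C f \<le> 1 - E (N - C) (fneg S f)"
      proof (rule ccontr)
        assume neg: "\<not> E C f \<le> 1 - E (N - C) (fneg S f)"
        define a where "a = E C f"
        define b where "b = E (N - C) (fneg S f)"
        have nf: "fneg S f \<in> LnF n S" using fneg_LnF[OF n f] .
        have a: "a \<in> Ln n" using Ev[OF C f] a_def by simp
        have b: "b \<in> Ln n" using Ev[OF _ nf, of "N - C"] b_def by auto
        have lt: "1 - b < a" using neg a_def b_def by simp
        obtain bs where bs: "mvapp bs (1-b) = 0" "mvapp bs a = 1"
          "\<forall>z\<in>Ln n. mvapp bs z = 0 \<or> mvapp bs z = 1"
          using sepLn[OF n Ln_neg[OF n b] a lt] by blast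
        define g where "g = (\<lambda>s\<in>S. mvapp bs (f s))"
        have g: "g \<in> LnF n S" using fapp_LnF[OF n f] g_def by simp
        have Eg: "E C g = 1" using hom_iter[OF ho C n f, of bs] bs a_def g_def by simp
        have fg: "fneg S g = (\<lambda>s\<in>S. mvapp (map Not bs) (fneg S f s))"
          unfolding g_def fneg_def by (rule restrict_ext) (simp add: mvapp_neg)
        have "E (N - C) (fneg S g) = mvapp (map Not bs) b"
          using hom_iter[OF ho _ n nf, of "N - C" "map Not bs"] fg b_def by auto
        also have "\<dots> = mvapp (map Not bs) (1 - (1 - b))" by simp
        also have "\<dots> = 1" using mvapp_neg[of bs "1 - b"] bs by simp
        finally have Eng: "E (N - C) (fneg S g) = 1" .
        have "min (E C g) (E (N - C) (fneg S g)) \<le> E (C \<union> (N - C)) (fmin S g (fneg S g))"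
          using sav[OF C Diff_subset g fneg_LnF[OF n g]] by blast
        moreover have "C \<union> (N - C) = N" using C by auto
        moreover have "fmin S g (fneg S g) = fconst S 0"
          unfolding fmin_def fconst_def
        proof (rule restrict_ext)
          fix s assume s: "s \<in> S"
          have "g s = 0 \<or> g s = 1" using bs(3) LnF_val[OF f s] g_def s by simp
          then show "min (g s) (fneg S g s) = 0" using s by (auto simp: fneg_def)
        qed
        moreover have "E N (fconst S 0) = 0" using sf by (simp add: safety_def)
        ultimately show False using Eg Eng by simp
      qed
    qed
    show "semi_playable n N S E \<and> homogeneous n N S E \<and> regular n N S E \<and> N_maximal n N S E"
      using semi ho reg nm by simp
  next
    assume R: "semi_playable n N S E \<and> homogeneous n N S E \<and> regular n N S E \<and> N_maximal n N S E"
    then have sp: "semi_playable n N S E" and ho: "homogeneous n N S E"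
      and reg: "regular n N S E" and nm: "N_maximal n N S E" by simp_all
    have mono': "\<And>C f g. C \<subseteq> N \<Longrightarrow> C \<noteq> N \<Longrightarrow> f \<in> LnF n S \<Longrightarrow> g \<in> LnF n S \<Longrightarrow> fle S f g \<Longrightarrow> E C f \<le> E C g"
      using sp unfolding semi_playable_def by simp
    have ll: "\<And>C. C \<subseteq> N \<Longrightarrow> C \<noteq> N \<Longrightarrow> E C (fconst S 1) = 1 \<and> E C (fconst S 0) = 0"
      using sp unfolding semi_playable_def by simp
    have sa': "\<And>C1 C2 f g. C1 \<subseteq> N \<Longrightarrow> C2 \<subseteq> N \<Longrightarrow> f \<in> LnF n S \<Longrightarrow> g \<in> LnF n S \<Longrightarrow>
        C1 \<inter> C2 = {} \<Longrightarrow> C1 \<union> C2 \<noteq> N \<Longrightarrow> min (E C1 f) (E C2 g) \<le> E (C1 \<union> C2) (fmin S f g)"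
      using sp unfolding semi_playable_def by simp
    have regv: "\<And>C f. C \<subseteq> N \<Longrightarrow> f \<in> LnF n S \<Longrightarrow> E C f \<le> 1 - E (N - C) (fneg S f)"
      using reg unfolding regular_def by simp
    have nmv: "\<And>f. f \<in> LnF n S \<Longrightarrow> 1 - E {} (fneg S f) \<le> E N f"
      using nm unfolding N_maximal_def by simp
    have e0: "{} \<noteq> N" using Nne by simp
    have mono: "\<And>C f g. C \<subseteq> N \<Longrightarrow> f \<in> LnF n S \<Longrightarrow> g \<in> LnF n S \<Longrightarrow> fle S f g \<Longrightarrow> E C f \<le> E C g"
    proof -
      fix C f g assume C: "C \<subseteq> N" and f: "f \<in> LnF n S" and g: "g \<in> LnF n S" and fg: "fle S f g"
      show "E C f \<le> E C g"
      proof (cases "C = N")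
        case False then show ?thesis using mono' C f g fg by blast
      next
        case True
        have "E N f \<le> 1 - E {} (fneg S f)" using regv[of N f] f by simp
        moreover have "E {} (fneg S g) \<le> E {} (fneg S f)"
          using mono'[OF _ e0 fneg_LnF[OF n g] fneg_LnF[OF n f]] fg
          by (auto simp: fle_def fneg_def)
        moreover have "1 - E {} (fneg S g) \<le> E N g" using nmv[OF g] .
        ultimately show ?thesis using True by simp
      qed
    qed
    have liveN: "E N (fconst S 1) = 1"
    proof -
      have "1 - E {} (fconst S 0) \<le> E N (fconst S 1)" using nmv[OF c1] fn0 by simp
      moreover have "E {} (fconst S 0) = 0" using ll[of "{}"] e0 by simp
      moreover have "E N (fconst S 1) \<le> 1" using Evr[OF _ c1, of N] by simp
      ultimately show ?thesis by simp
    qed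
    have safeN: "E N (fconst S 0) = 0"
    proof -
      have "E N (fconst S 0) \<le> 1 - E {} (fconst S 1)" using regv[OF _ c0, of N] fn1 by simp
      moreover have "E {} (fconst S 1) = 1" using ll[of "{}"] e0 by simp
      moreover have "0 \<le> E N (fconst S 0)" using Evr[OF _ c0, of N] by simp
      ultimately show ?thesis by simp
    qed
    have core: "\<And>C1 C2 f g. C1 \<subseteq> N \<Longrightarrow> C2 \<subseteq> N \<Longrightarrow> C1 \<inter> C2 = {} \<Longrightarrow> C1 \<union> C2 = N \<Longrightarrow>
      C2 \<noteq> N \<Longrightarrow> f \<in> LnF n S \<Longrightarrow> g \<in> LnF n S \<Longrightarrow> min (E C1 f) (E C2 g) \<le> E N (fmin S f g)"
    proof -
      fix C1 C2 f g
      assume C1: "C1 \<subseteq> N" and C2: "C2 \<subseteq> N" and dj: "C1 \<inter> C2 = {}" and un: "C1 \<union> C2 = N"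
        and C2N: "C2 \<noteq> N" and f: "f \<in> LnF n S" and g: "g \<in> LnF n S"
      show "min (E C1 f) (E C2 g) \<le> E N (fmin S f g)"
      proof (rule ccontr)
        assume neg: "\<not> min (E C1 f) (E C2 g) \<le> E N (fmin S f g)"
        define a where "a = E C1 f"
        define b where "b = E C2 g"
        define c where "c = E N (fmin S f g)"
        have a: "a \<in> Ln n" using Ev[OF C1 f] a_def by simp
        have b: "b \<in> Ln n" using Ev[OF C2 g] b_def by simp
        have c: "c \<in> Ln n" using Ev[OF _ fmin_LnF[OF f g], of N] c_def by simp
        have ab: "min a b \<in> Ln n" using a b by (simp add: min_def)
        have lt: "c < min a b" using neg unfolding a_def b_def c_def by linarith
        obtain bs where bs: "mvapp bs c = 0" "mvapp bs (min a b) = 1"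
          "\<forall>z\<in>Ln n. mvapp bs z = 0 \<or> mvapp bs z = 1"
          using sepLn[OF n c ab lt] by blast
        define F where "F = (\<lambda>s\<in>S. mvapp bs (f s))"
        define G where "G = (\<lambda>s\<in>S. mvapp bs (g s))"
        have F: "F \<in> LnF n S" using fapp_LnF[OF n f] F_def by simp
        have G: "G \<in> LnF n S" using fapp_LnF[OF n g] G_def by simp
        have mm: "min (mvapp bs a) (mvapp bs b) = 1" using bs(2) mvapp_min by simp
        have EF: "1 \<le> E C1 F" using hom_iter[OF ho C1 n f, of bs] F_def a_def mm
          by (simp add: min_def split: if_splits)
        have EG: "1 \<le> E C2 G" using hom_iter[OF ho C2 n g, of bs] G_def b_def mm
          by (simp add: min_def split: if_splits)
        have FG: "fmin S F G = (\<lambda>s\<in>S. mvapp bs (fmin S f g s))"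
          unfolding fmin_def F_def G_def by (rule restrict_ext) (simp add: mvapp_min)
        have EFG: "E N (fmin S F G) = 0"
          using hom_iter[OF ho _ n fmin_LnF[OF f g], of N bs] FG c_def bs(1) by simp
        define H where "H = fneg S (fmin S F G)"
        have H: "H \<in> LnF n S" using H_def fneg_LnF[OF n fmin_LnF[OF F G]] by simp
        have EH: "1 \<le> E {} H" using nmv[OF fmin_LnF[OF F G]] EFG H_def by simp
        define K where "K = fmin S H G"
        have K: "K \<in> LnF n S" using K_def fmin_LnF[OF H G] by simp
        have "min (E {} H) (E C2 G) \<le> E ({} \<union> C2) (fmin S H G)"
          using sa'[OF empty_subsetI C2 H G] C2N by simp
        then have EK: "1 \<le> E C2 K" using EH EG K_def by simp
        have NC: "N - C2 = C1" using un dj by auto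
        have "E C2 K \<le> 1 - E C1 (fneg S K)" using regv[OF C2 K] NC by simp
        moreover have "fle S F (fneg S K)"
          unfolding fle_def
        proof
          fix s assume s: "s \<in> S"
          have "F s = 0 \<or> F s = 1" using bs(3) LnF_val[OF f s] F_def s by simp
          moreover have "G s = 0 \<or> G s = 1" using bs(3) LnF_val[OF g s] G_def s by simp
          ultimately show "F s \<le> fneg S K s" using s
            by (auto simp: K_def H_def fneg_def fmin_def)
        qed
        then have "E C1 F \<le> E C1 (fneg S K)" using mono[OF C1 F fneg_LnF[OF n K]] by simp
        ultimately show False using EF EK by simp
      qed
    qed
    have super: "superadditive n N S E"
      unfolding superadditive_def
    proof (intro allI impI ballI)
      fix C1 C2 f g assume C1: "C1 \<subseteq> N" and C2: "C2 \<subseteq> N" and f: "f \<in> LnF n S"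
        and g: "g \<in> LnF n S" and dj: "C1 \<inter> C2 = {}"
      show "min (E C1 f) (E C2 g) \<le> E (C1 \<union> C2) (fmin S f g)"
      proof (cases "C1 \<union> C2 = N")
        case False then show ?thesis using sa'[OF C1 C2 f g dj] by simp
      next
        case True
        show ?thesis
        proof (cases "C2 = N")
          case False then show ?thesis using core[OF C1 C2 dj True False f g] True by simp
        next
          case C2N: True
          then have "C1 = {}" using dj C1 by auto
          then have "C1 \<noteq> N" using Nne by simp
          have "min (E C2 g) (E C1 f) \<le> E N (fmin S g f)"
            using core[OF C2 C1 _ _ \<open>C1 \<noteq> N\<close> g f] dj True by (auto simp: Un_commute Int_commute)
          moreover have "fmin S g f = fmin S f g" unfolding fmin_def by (simp add: min.commute)
          ultimately show ?thesis using True by (simp add: min.commute)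
        qed
      qed
    qed
    have "outcome_monotonic n N S E"
      unfolding outcome_monotonic_def using mono by simp
    moreover have "liveness n N S E" unfolding liveness_def using ll liveN by auto
    moreover have "safety n N S E" unfolding safety_def using ll safeN by auto
    ultimately show "playable n N S E" using nm super ho by (simp add: playable_def)
  qed
qed

end
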